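(* Let $w_1,\dots,w_n$ be positive integers with $\sum_{i\in[n]}w_i=3t+1$ for some integer $t$, and let $g$ be a positive integer such that the adjustment $f_g$ is $t$-bounded for $(w_1,\dots,w_n)$. Set $d_i=f_g(w_i)/g$ for $i\in[n]$. Then for every partition $(A,B)$ of $[n]$ (i.e. $A\cup B=[n]$, $A\cap B=\emptyset$) with $\sum_{i\in A}w_i>2\sum_{i\in B}w_i$, it holds that $\sum_{i\in A}d_i>\sum_{i\in B}d_i$; that is, $(w_1,\dots,w_n)\mapsto(d_1,\dots,d_n)$ is a qualified allocation.
   Context: For a positive integer $g$, the adjustment $f_g$ maps a positive integer $w$ to $w-(w\bmod g)$ if $w\bmod g<g/2$, and to $w+g-(w\bmod g)$ otherwise; thus $f_g(w)$ is a non-negative multiple of $g$. The adjustment $f_g$ is called $t$-bounded for $(w_1,\dots,w_n)$ if $\sum_{i\in[n]}|w_i-f_g(w_i)|\le t$. A map sending $(w_1,\dots,w_n)$ to non-negative integers $(d_1,\dots,d_n)$ is a qualified allocation if for every partition $(A,B)$ of $[n]$ with $\sum_{i\in A}w_i>2\sum_{i\in B}w_i$ one has $\sum_{i\in A}d_i>\sum_{i\in B}d_i$. *)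

theory Defs
  imports Main
begin

text \<open>The adjustment f_g: rounds w to the nearest multiple of g (ties rounded up).
  The condition (w mod g) < g/2 is written 2 * (w mod g) < g.\<close>
definition adj :: "nat \<Rightarrow> nat \<Rightarrow> nat" where
  "adj g w = (if 2 * (w mod g) < g then w - w mod g else w + g - w mod g)"

definition t_bounded :: "nat \<Rightarrow> int \<Rightarrow> nat \<Rightarrow> (nat \<Rightarrow> nat) \<Rightarrow> bool" where
  "t_bounded g t n w \<longleftrightarrow> (\<Sum>i\<in>{1..n}. \<bar>int (w i) - int (adj g (w i))\<bar>) \<le> t"

definition qualified_allocation :: "nat \<Rightarrow> (nat \<Rightarrow> nat) \<Rightarrow> (nat \<Rightarrow> nat) \<Rightarrow> bool" where
  "qualified_allocation n w d \<longleftrightarrow>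
     (\<forall>A B. A \<union> B = {1..n} \<and> A \<inter> B = {} \<and>
        (\<Sum>i\<in>A. w i) > 2 * (\<Sum>i\<in>B. w i) \<longrightarrow> (\<Sum>i\<in>A. d i) > (\<Sum>i\<in>B. d i))"

end

theory Submission
  imports Defs
begin

lemma adj_dvd: "g > 0 \<Longrightarrow> g dvd adj g w"
proof -
  assume g: "g > 0"
  have m: "w mod g \<le> w" "w mod g < g" using g by auto
  have "g dvd w - w mod g" by (simp add: minus_mod_eq_mult_div)
  moreover have "w + g - w mod g = (w - w mod g) + g" using m by simp
  ultimately have "g dvd w + g - w mod g" by (metis dvd_add dvd_refl)
  then show ?thesis using \<open>g dvd w - w mod g\<close> unfolding adj_def by simp
qed

theorem mainTheorem3:
  fixes n g :: nat and w :: "nat \<Rightarrow> nat" and t :: int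
  assumes wpos: "\<forall>i\<in>{1..n}. w i > 0"
    and wsum: "int (\<Sum>i\<in>{1..n}. w i) = 3 * t + 1"
    and gpos: "g > 0"
    and bnd: "t_bounded g t n w"
  shows "qualified_allocation n w (\<lambda>i. adj g (w i) div g)"
  unfolding qualified_allocation_def
proof (intro allI impI)
  fix A B :: "nat set"
  assume h: "A \<union> B = {1..n} \<and> A \<inter> B = {} \<and> (\<Sum>i\<in>A. w i) > 2 * (\<Sum>i\<in>B. w i)"
  define f where "f i = adj g (w i)" for i
  define e where "e i = \<bar>int (w i) - int (f i)\<bar>" for i
  have fA: "finite A" "finite B" using h by (metis finite_Un finite_atLeastAtMost)+
  have esum: "(\<Sum>i\<in>A. e i) + (\<Sum>i\<in>B. e i) \<le> t"
    using bnd h fA unfolding t_bounded_def e_def f_def by (metis sum.union_disjoint)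
  have wsum2: "int (\<Sum>i\<in>A. w i) + int (\<Sum>i\<in>B. w i) = 3 * t + 1"
    using wsum h fA by (metis of_nat_add sum.union_disjoint)
  have e0: "(\<Sum>i\<in>B. e i) \<ge> 0" unfolding e_def by (simp add: sum_nonneg)
  have e1: "(\<Sum>i\<in>A. e i) \<ge> 0" unfolding e_def by (simp add: sum_nonneg)
  have la: "int (\<Sum>i\<in>A. f i) \<ge> int (\<Sum>i\<in>A. w i) - (\<Sum>i\<in>A. e i)"
  proof -
    have "(\<Sum>i\<in>A. int (w i) - e i) \<le> (\<Sum>i\<in>A. int (f i))"
      by (rule sum_mono) (simp add: e_def)
    then show ?thesis by (simp add: sum_subtractf)
  qed
  have lb: "int (\<Sum>i\<in>B. f i) \<le> int (\<Sum>i\<in>B. w i) + (\<Sum>i\<in>B. e i)"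
  proof -
    have "(\<Sum>i\<in>B. int (f i)) \<le> (\<Sum>i\<in>B. int (w i) + e i)"
      by (rule sum_mono) (simp add: e_def)
    then show ?thesis by (simp add: sum.distrib)
  qed
  have hh: "int (\<Sum>i\<in>A. w i) > 2 * int (\<Sum>i\<in>B. w i)" using h by linarith
  have lt: "(\<Sum>i\<in>B. f i) < (\<Sum>i\<in>A. f i)"
    using la lb hh wsum2 esum e0 e1 by linarith
  have dv: "\<And>i. f i div g * g = f i" using adj_dvd[OF gpos] unfolding f_def by simp
  have "(\<Sum>i\<in>B. f i div g) * g < (\<Sum>i\<in>A. f i div g) * g"
    using lt by (simp add: sum_distrib_right dv)
  then show "(\<Sum>i\<in>B. adj g (w i) div g) < (\<Sum>i\<in>A. adj g (w i) div g)"
    unfolding f_def by (simp add: mult_less_cancel2)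
qed

end
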